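(* Let $p$ be a prime, $n\geq1$ an integer and $\alpha\in\mathbb{Z}_p$. Then $\mathfrak{M}_{p,\alpha}^n\cap\mathbb{Z}[X]=(p^n,X-a)$, where $a\in\mathbb{Z}$ is any integer with $\alpha\equiv a\pmod{p^n}$. This ideal is $(p,X-j)$-primary, where $j\in\{0,\dots,p-1\}$, $j\equiv\alpha\pmod p$. Moreover, for $\beta\in\mathbb{Z}_p$, $\mathfrak{M}_{p,\alpha}^n\cap\mathbb{Z}[X]=\mathfrak{M}_{p,\beta}^n\cap\mathbb{Z}[X]$ if and only if $\alpha\equiv\beta\pmod{p^n}$.
   Context: $\mathrm{Int}(\mathbb{Z})=\{f\in\mathbb{Q}[X] : f(\mathbb{Z})\subseteq\mathbb{Z}\}$; $\mathbb{Z}_p$ is the ring of $p$-adic integers; $\mathfrak{M}_{p,\alpha}=\{f\in\mathrm{Int}(\mathbb{Z}) : f(\alpha)\in p\mathbb{Z}_p\}$ and $\mathfrak{M}_{p,\alpha}^n$ is its $n$-th power as an ideal of $\mathrm{Int}(\mathbb{Z})$. It is known (Loper) that $\mathfrak{M}_{p,\alpha}^n=\{f\in\mathrm{Int}(\mathbb{Z}) : f(\alpha)\in p^n\mathbb{Z}_p\}$. *)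

theory Defs
  imports "HOL-Computational_Algebra.Polynomial" "HOL-Computational_Algebra.Primes"
begin

text \<open>p-adic integers, modelled as coherent sequences of residues:
  alpha k is the residue of alpha modulo p^k, in the range 0 ..< p^k.\<close>
definition padic_int :: "int \<Rightarrow> (nat \<Rightarrow> int) \<Rightarrow> bool" where
  "padic_int p \<alpha> \<longleftrightarrow> (\<forall>k. 0 \<le> \<alpha> k \<and> \<alpha> k < p ^ k) \<and> (\<forall>k. \<alpha> (Suc k) mod p ^ k = \<alpha> k)"

definition IntZ :: "rat poly set" where
  "IntZ = {f. \<forall>z::int. poly f (of_int z) \<in> \<int>}"

text \<open>Since integer-valued polynomials are p-adically
  continuous on Z and p^n Z_p is open and closed, this holds iff p^n divides f(alpha_k)
  for all sufficiently large k (alpha_k \<rightarrow> alpha).\<close>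
definition val_in_pn :: "int \<Rightarrow> nat \<Rightarrow> (nat \<Rightarrow> int) \<Rightarrow> rat poly \<Rightarrow> bool" where
  "val_in_pn p n \<alpha> f \<longleftrightarrow> (\<exists>K. \<forall>k\<ge>K. poly f (of_int (\<alpha> k)) / of_int (p ^ n) \<in> \<int>)"

text \<open>M_{p,alpha}^n = {f \<in> Int(Z). f(alpha) \<in> p^n Z_p} (Loper's description of the n-th power).\<close>
definition Mpow :: "int \<Rightarrow> (nat \<Rightarrow> int) \<Rightarrow> nat \<Rightarrow> rat poly set" where
  "Mpow p \<alpha> n = {f \<in> IntZ. val_in_pn p n \<alpha> f}"

definition MpowZ :: "int \<Rightarrow> (nat \<Rightarrow> int) \<Rightarrow> nat \<Rightarrow> int poly set" where
  "MpowZ p \<alpha> n = {g. map_poly of_int g \<in> Mpow p \<alpha> n}"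

definition ideal2 :: "int \<Rightarrow> int poly \<Rightarrow> int poly set" where
  "ideal2 c h = {g. \<exists>u v. g = smult c u + h * v}"

definition is_ideal :: "int poly set \<Rightarrow> bool" where
  "is_ideal I \<longleftrightarrow> 0 \<in> I \<and> (\<forall>f\<in>I. \<forall>g\<in>I. f + g \<in> I) \<and> (\<forall>f\<in>I. \<forall>r. r * f \<in> I)"

definition radical :: "int poly set \<Rightarrow> int poly set" where
  "radical I = {f. \<exists>m. f ^ m \<in> I}"

definition primary_ideal :: "int poly set \<Rightarrow> bool" where
  "primary_ideal I \<longleftrightarrow> is_ideal I \<and> I \<noteq> UNIV \<and>
     (\<forall>f g. f * g \<in> I \<longrightarrow> f \<in> I \<or> g \<in> radical I)"

definition primary_for :: "int poly set \<Rightarrow> int poly set \<Rightarrow> bool" where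
  "primary_for I P \<longleftrightarrow> primary_ideal I \<and> radical I = P"

end

theory Submission imports Defs begin

lemma poly_of_int_map: "poly (map_poly (of_int :: int \<Rightarrow> rat) g) (of_int z) = of_int (poly g z)"
  by (induction g) (auto simp: map_poly_pCons)

lemma poly_mod_cong: "x mod m = y mod m \<Longrightarrow> poly g x mod m = poly (g::int poly) y mod m"
proof (induction g)
  case 0 then show ?case by simp
next
  case (pCons c g)
  have ih: "poly g x mod m = poly g y mod m" using pCons.IH pCons.prems .
  have "(x * poly g x) mod m = (y * poly g y) mod m"
    by (rule mod_mult_cong[OF pCons.prems ih])
  then have "(c + x * poly g x) mod m = (c + y * poly g y) mod m"
    by (rule mod_add_cong[OF refl])
  then show ?case by (simp only: poly_pCons)
qed

lemma padic_mod:
  assumes "padic_int p \<alpha>" "m \<le> k" shows "\<alpha> k mod p ^ m = \<alpha> m"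
  using assms(2)
proof (induction k rule: dec_induct)
  case base
  then show ?case using assms(1) unfolding padic_int_def by simp
next
  case (step k)
  have "\<alpha> (Suc k) mod p ^ m = (\<alpha> (Suc k) mod p ^ k) mod p ^ m"
    using step(1) by (simp add: le_imp_power_dvd mod_mod_cancel)
  also have "\<dots> = \<alpha> k mod p ^ m" using assms(1) unfolding padic_int_def by simp
  finally show ?case using step by simp
qed

lemma rat_div_Ints: "(d::int) \<noteq> 0 \<Longrightarrow> (of_int x / of_int d :: rat) \<in> \<int> \<longleftrightarrow> d dvd x"
proof
  assume d: "d \<noteq> 0" and "(of_int x / of_int d :: rat) \<in> \<int>"
  then obtain k where "(of_int x / of_int d :: rat) = of_int k" by (auto elim: Ints_cases)
  then have "(of_int x :: rat) = of_int (d * k)" using d by (simp add: field_simps)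
  then have "x = d * k" by (simp only: of_int_eq_iff)
  then show "d dvd x" by simp
next
  assume "d \<noteq> 0" "d dvd x"
  then obtain k where "x = d * k" by auto
  then show "(of_int x / of_int d :: rat) \<in> \<int>" using \<open>d \<noteq> 0\<close> by simp
qed

lemma MpowZ_char:
  assumes "prime p" "padic_int p \<alpha>"
  shows "MpowZ p \<alpha> n = {g. p ^ n dvd poly g (\<alpha> n)}"
proof -
  have pn: "p ^ n \<noteq> 0" using assms(1) by auto
  have dv: "(of_int x / of_int p ^ n :: rat) \<in> \<int> \<longleftrightarrow> p ^ n dvd x" for x
    using rat_div_Ints[OF pn, of x] by simp
  have an: "\<alpha> n mod p ^ n = \<alpha> n" using assms(2) unfolding padic_int_def by simp
  have cong: "p ^ n dvd poly g (\<alpha> k) \<longleftrightarrow> p ^ n dvd poly g (\<alpha> n)" if "k \<ge> n" for g k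
  proof -
    have "poly g (\<alpha> k) mod p ^ n = poly g (\<alpha> n) mod p ^ n"
      by (rule poly_mod_cong) (simp add: padic_mod[OF assms(2) that] an)
    then show ?thesis by (simp add: mod_eq_0_iff_dvd[symmetric])
  qed
  show ?thesis
  proof (intro set_eqI iffI)
    fix g assume "g \<in> MpowZ p \<alpha> n"
    then obtain K where K: "\<forall>k\<ge>K. p ^ n dvd poly g (\<alpha> k)"
      unfolding MpowZ_def Mpow_def val_in_pn_def by (auto simp: poly_of_int_map dv)
    then show "g \<in> {g. p ^ n dvd poly g (\<alpha> n)}"
      using cong[of "max K n" g] by auto
  next
    fix g assume "g \<in> {g. p ^ n dvd poly g (\<alpha> n)}"
    then have "\<forall>k\<ge>n. p ^ n dvd poly g (\<alpha> k)" using cong by blast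
    then have "val_in_pn p n \<alpha> (map_poly of_int g)"
      unfolding val_in_pn_def by (simp only: poly_of_int_map of_int_power dv) blast
    moreover have "map_poly of_int g \<in> IntZ"
      unfolding IntZ_def by (simp add: poly_of_int_map)
    ultimately show "g \<in> MpowZ p \<alpha> n"
      unfolding MpowZ_def Mpow_def by simp
  qed
qed

lemma ideal2_char: "ideal2 c [:-a, 1:] = {g. c dvd poly g a}"
proof (intro set_eqI iffI)
  fix g assume "g \<in> ideal2 c [:-a, 1:]"
  then show "g \<in> {g. c dvd poly g a}" unfolding ideal2_def by auto
next
  fix g assume "g \<in> {g. c dvd poly g a}"
  then obtain k where k: "poly g a = c * k" by auto
  have "g = [:-a, 1:] * synthetic_div g a + [:poly g a:]" using synthetic_div_correct'[of a g] by simp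
  also have "[:poly g a:] = smult c [:k:]" using k by simp
  finally have "g = smult c [:k:] + [:-a, 1:] * synthetic_div g a" by (simp add: add.commute)
  then show "g \<in> ideal2 c [:-a, 1:]" unfolding ideal2_def by blast
qed

theorem mainTheorem7:
  fixes p :: int and n :: nat and \<alpha> :: "nat \<Rightarrow> int"
  assumes "prime p" and "n \<ge> 1" and "padic_int p \<alpha>"
  shows "(\<forall>a::int. a mod p ^ n = \<alpha> n \<longrightarrow> MpowZ p \<alpha> n = ideal2 (p ^ n) [:-a, 1:])
       \<and> (\<forall>j::int. 0 \<le> j \<and> j < p \<and> j mod p = \<alpha> 1 \<longrightarrow>
             primary_for (MpowZ p \<alpha> n) (ideal2 p [:-j, 1:]))
       \<and> (\<forall>\<beta>. padic_int p \<beta> \<longrightarrow> (MpowZ p \<alpha> n = MpowZ p \<beta> n \<longleftrightarrow> \<alpha> n = \<beta> n))"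
proof (intro conjI allI impI)
  define A where "A = \<alpha> n"
  have I: "MpowZ p \<alpha> n = {g. p ^ n dvd poly g A}"
    unfolding A_def by (rule MpowZ_char[OF assms(1,3)])
  have An: "A mod p ^ n = A" using assms(3) unfolding padic_int_def A_def by simp
  have dvd_cong: "(m::int) dvd poly g x \<longleftrightarrow> m dvd poly g y" if "x mod m = y mod m" for m g x y
    using poly_mod_cong[OF that, of g] by (simp add: mod_eq_0_iff_dvd[symmetric])
  {
    fix a :: int assume a: "a mod p ^ n = \<alpha> n"
    have h: "a mod p ^ n = A mod p ^ n" using a An unfolding A_def by simp
    show "MpowZ p \<alpha> n = ideal2 (p ^ n) [:-a, 1:]"
      unfolding I ideal2_char by (simp add: dvd_cong[OF h])
  }
  {
    fix j :: int assume j: "0 \<le> j \<and> j < p \<and> j mod p = \<alpha> 1"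
    have "A mod p = \<alpha> 1" using padic_mod[OF assms(3) assms(2)] unfolding A_def by simp
    then have Aj: "A mod p = j mod p" using j by simp
    have P: "ideal2 p [:-j, 1:] = {g. p dvd poly g A}"
      unfolding ideal2_char by (simp add: dvd_cong[OF Aj])
    have pr: "prime p" by fact
    have pdvd: "p dvd x" if "p ^ n dvd x" for x
    proof -
      have "p dvd p ^ n" using assms(2) by (simp add: dvd_power)
      then show ?thesis using that by (rule dvd_trans)
    qed
    have rad: "g \<in> radical {g. p ^ n dvd poly g A}" if "p dvd poly g A" for g
    proof -
      have "p ^ n dvd (poly g A) ^ n" using that by (simp add: dvd_power_same)
      then show ?thesis unfolding radical_def by (auto simp: poly_power)
    qed
    have isI: "is_ideal {g. p ^ n dvd poly g A}"
      unfolding is_ideal_def by auto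
    have ne: "{g. p ^ n dvd poly g A} \<noteq> UNIV"
    proof
      assume "{g. p ^ n dvd poly g A} = UNIV"
      then have "p ^ n dvd poly 1 A" by blast
      then have "p dvd 1" using pdvd[of 1] by simp
      then show False using pr by (simp add: not_prime_unit)
    qed
    have prim: "f \<in> {g. p ^ n dvd poly g A} \<or> g \<in> radical {g. p ^ n dvd poly g A}"
      if fg: "f * g \<in> {g. p ^ n dvd poly g A}" for f g
    proof (cases "p dvd poly g A")
      case True then show ?thesis using rad by blast
    next
      case False
      then have "coprime p (poly g A)" using pr by (simp add: prime_imp_coprime)
      then have "coprime (p ^ n) (poly g A)" by simp
      moreover have "p ^ n dvd poly f A * poly g A" using fg by simp
      ultimately show ?thesis by (simp add: coprime_dvd_mult_left_iff)
    qed
    have radeq: "radical {g. p ^ n dvd poly g A} = {g. p dvd poly g A}"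
    proof (intro set_eqI iffI)
      fix f assume "f \<in> radical {g. p ^ n dvd poly g A}"
      then obtain m where "p ^ n dvd (poly f A) ^ m" unfolding radical_def by (auto simp: poly_power)
      then have "p dvd (poly f A) ^ m" using pdvd by blast
      then show "f \<in> {g. p dvd poly g A}" using pr by (simp add: prime_dvd_power)
    next
      fix f assume "f \<in> {g. p dvd poly g A}"
      then show "f \<in> radical {g. p ^ n dvd poly g A}" using rad by blast
    qed
    show "primary_for (MpowZ p \<alpha> n) (ideal2 p [:-j, 1:])"
      unfolding primary_for_def primary_ideal_def I P
      using isI ne prim radeq by blast
  }
  {
    fix \<beta> assume b: "padic_int p \<beta>"
    have J: "MpowZ p \<beta> n = {g. p ^ n dvd poly g (\<beta> n)}"
      by (rule MpowZ_char[OF assms(1) b])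
    have Bn: "\<beta> n mod p ^ n = \<beta> n" using b unfolding padic_int_def by simp
    show "MpowZ p \<alpha> n = MpowZ p \<beta> n \<longleftrightarrow> \<alpha> n = \<beta> n"
    proof
      assume eq: "MpowZ p \<alpha> n = MpowZ p \<beta> n"
      have "[:-A, 1:] \<in> MpowZ p \<alpha> n" unfolding I by simp
      then have "p ^ n dvd \<beta> n - A" unfolding eq J by simp
      then have "\<beta> n mod p ^ n = A mod p ^ n" by (simp add: mod_eq_dvd_iff)
      then show "\<alpha> n = \<beta> n" using An Bn A_def by simp
    next
      assume "\<alpha> n = \<beta> n"
      then show "MpowZ p \<alpha> n = MpowZ p \<beta> n" using I J A_def by simp
    qed
  }
qed

end
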